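(* Consider one-sided matching with $n$ agents, $n$ items and unit-sum valuations. The best possible distortion of a deterministic ordinal matching algorithm is $\Theta(n^2)$. More precisely: (i) every ordinal algorithm whose output matches at least one agent to her top-ranked item has distortion at most $n^2$; (ii) every deterministic ordinal algorithm has distortion $\Omega(n^2)$.
   Context: One-sided matching: there is a set $N$ of $n$ agents and a set $A$ of $n$ items. Each agent $i$ has a valuation function $v_i:A\to\mathbb{R}_{\ge 0}$. Valuations are unit-sum if $\sum_{j\in A}v_i(j)=1$ for every agent $i$. A profile $\mathbf v=(v_i)_{i\in N}$ induces an ordinal profile $\succ_{\mathbf v}=(\succ_i)_{i\in N}$, where each $\succ_i$ is a strict ranking of $A$ consistent with $v_i$ (if $a\succ_i b$ then $v_i(a)\ge v_i(b)$). A matching $Y=(y_i)_{i\in N}$ is a bijection from $N$ to $A$. Its social welfare is $\mathrm{SW}(Y\mid\mathbf v)=\sum_{i\in N}v_i(y_i)$. $X(\mathbf v)$ denotes a matching of maximum social welfare. A deterministic matching algorithm making $k$ queries per agent receives $\succ_{\mathbf v}$ as input. It may adaptively make value queries, where a query $(i,j)$ returns $v_i(j)$, with at most $k$ queries per agent. It outputs a matching $\mathcal A(\succ_{\mathbf v})$. An ordinal algorithm is one with $k=0$. The distortion of an algorithm over a class of valuations is $\sup_{\mathbf v}\mathrm{SW}(X(\mathbf v)\mid\mathbf v)/\mathrm{SW}(\mathcal A(\succ_{\mathbf v})\mid\mathbf v)$, where the supremum is over all profiles in the class. *)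

theory Defs
  imports Complex_Main "HOL-Combinatorics.Permutations" "HOL-Library.Extended_Real"
begin

text \<open>Agents and items are both indexed by {..<n}. A valuation profile is
  v :: nat => nat => real, where v i j is the value of agent i for item j.
  A matching is a permutation y of {..<n} (agent i gets item y i).
  An ordinal profile is r :: nat => nat => nat, where r i k is the item that
  agent i ranks at position k (position 0 = top); r i permutes {..<n}.\<close>

definition unit_sum :: "nat \<Rightarrow> (nat \<Rightarrow> nat \<Rightarrow> real) \<Rightarrow> bool" where
  "unit_sum n v \<longleftrightarrow> (\<forall>i<n. (\<forall>j<n. v i j \<ge> 0) \<and> (\<Sum>j<n. v i j) = 1)"

definition matchings :: "nat \<Rightarrow> (nat \<Rightarrow> nat) set" where
  "matchings n = {y. y permutes {..<n}}"

definition ordinal_profile :: "nat \<Rightarrow> (nat \<Rightarrow> nat \<Rightarrow> nat) \<Rightarrow> bool" where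
  "ordinal_profile n r \<longleftrightarrow> (\<forall>i<n. r i permutes {..<n}) \<and> (\<forall>i\<ge>n. r i = id)"

definition consistent :: "nat \<Rightarrow> (nat \<Rightarrow> nat \<Rightarrow> real) \<Rightarrow> (nat \<Rightarrow> nat \<Rightarrow> nat) \<Rightarrow> bool" where
  "consistent n v r \<longleftrightarrow> ordinal_profile n r \<and>
     (\<forall>i<n. \<forall>k l. k < l \<and> l < n \<longrightarrow> v i (r i k) \<ge> v i (r i l))"

definition SW :: "nat \<Rightarrow> (nat \<Rightarrow> nat \<Rightarrow> real) \<Rightarrow> (nat \<Rightarrow> nat) \<Rightarrow> real" where
  "SW n v y = (\<Sum>i<n. v i (y i))"

definition OPT :: "nat \<Rightarrow> (nat \<Rightarrow> nat \<Rightarrow> real) \<Rightarrow> real" where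
  "OPT n v = Max (SW n v ` matchings n)"

definition ordinal_alg :: "nat \<Rightarrow> ((nat \<Rightarrow> nat \<Rightarrow> nat) \<Rightarrow> (nat \<Rightarrow> nat)) \<Rightarrow> bool" where
  "ordinal_alg n A \<longleftrightarrow> (\<forall>r. ordinal_profile n r \<longrightarrow> A r \<in> matchings n)"

definition ratio :: "real \<Rightarrow> real \<Rightarrow> ereal" where
  "ratio opt sw = (if sw = 0 then \<infinity> else ereal (opt / sw))"

text \<open>Distortion over unit-sum valuations (worst case also over tie-breaking
  of the induced ordinal profile).\<close>
definition distortion :: "nat \<Rightarrow> ((nat \<Rightarrow> nat \<Rightarrow> nat) \<Rightarrow> (nat \<Rightarrow> nat)) \<Rightarrow> ereal" where
  "distortion n A = (SUP vr \<in> {(v, r). unit_sum n v \<and> consistent n v r}.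
      ratio (OPT n (fst vr)) (SW n (fst vr) (A (snd vr))))"

end

theory Submission
  imports Defs
begin

lemma extend_perm:
  assumes fin: "finite S" and PS: "P \<subseteq> S" and inj: "inj_on f P" and fP: "f ` P \<subseteq> S"
  shows "\<exists>p. p permutes S \<and> (\<forall>x\<in>P. p x = f x)"
proof -
  have "card (S - P) = card (S - f ` P)"
    using fin PS fP inj by (simp add: card_Diff_subset card_image finite_subset)
  then obtain g where g: "bij_betw g (S - P) (S - f ` P)"
    using finite_same_card_bij fin by blast
  define p where "p x = (if x \<in> P then f x else if x \<in> S then g x else x)" for x
  have b1: "bij_betw p P (f ` P)"
    using inj by (simp add: bij_betw_def inj_on_def p_def image_def)
  have b2: "bij_betw p (S - P) (S - f ` P)"
    using g by (rule bij_betw_cong[THEN iffD2, rotated]) (simp add: p_def)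
  have "bij_betw p (P \<union> (S - P)) (f ` P \<union> (S - f ` P))"
    by (rule bij_betw_combine[OF b1 b2]) auto
  moreover have "P \<union> (S - P) = S" "f ` P \<union> (S - f ` P) = S" using PS fP by auto
  ultimately have "bij_betw p S S" by simp
  hence "p permutes S" by (rule bij_imp_permutes) (use PS in \<open>auto simp: p_def\<close>)
  thus ?thesis by (auto simp: p_def)
qed

lemma finite_matchings: "finite (matchings n)"
  unfolding matchings_def by (rule finite_permutations) simp

lemma id_matchings: "id \<in> matchings n"
  unfolding matchings_def by simp

lemma OPT_ge: "y \<in> matchings n \<Longrightarrow> SW n v y \<le> OPT n v"
  unfolding OPT_def using finite_matchings by (intro Max_ge) auto

lemma matching_lt: "y \<in> matchings n \<Longrightarrow> i < n \<Longrightarrow> y i < n"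
  unfolding matchings_def using permutes_in_image by fastforce

lemma OPT_le:
  assumes "unit_sum n v"
  shows "OPT n v \<le> real n"
proof -
  have "SW n v y \<le> real n" if y: "y \<in> matchings n" for y
  proof -
    have "v i (y i) \<le> 1" if "i < n" for i
    proof -
      have yi: "y i < n" using matching_lt[OF y that] .
      have "v i (y i) \<le> (\<Sum>j<n. v i j)"
        using assms that yi unfolding unit_sum_def
        by (intro member_le_sum) auto
      thus ?thesis using assms that unfolding unit_sum_def by auto
    qed
    hence "SW n v y \<le> (\<Sum>i<n. (1::real))" unfolding SW_def by (intro sum_mono) auto
    thus ?thesis by simp
  qed
  thus ?thesis unfolding OPT_def using finite_matchings id_matchings
    by (subst Max_le_iff) auto
qed

lemma part1:
  assumes n: "n \<ge> 1" and alg: "ordinal_alg n A"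
    and top: "\<forall>r. ordinal_profile n r \<longrightarrow> (\<exists>i<n. A r i = r i 0)"
  shows "distortion n A \<le> ereal (real n ^ 2)"
  unfolding distortion_def
proof (rule SUP_least, clarify)
  fix v r assume us: "unit_sum n v" and cons: "consistent n v r"
  have op: "ordinal_profile n r" using cons unfolding consistent_def by auto
  define y where "y = A r"
  have y: "y \<in> matchings n" using alg op unfolding ordinal_alg_def y_def by auto
  obtain i where i: "i < n" "y i = r i 0" using top op unfolding y_def by auto
  have rp: "r i permutes {..<n}" using op i unfolding ordinal_profile_def by auto
  have maxv: "v i k \<le> v i (r i 0)" if k: "k < n" for k
  proof -
    define l where "l = inv (r i) k"
    have l: "l < n" "r i l = k"
      using permutes_in_image[OF permutes_inv[OF rp]] k permutes_inverses(1)[OF rp]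
      unfolding l_def by auto
    show ?thesis
    proof (cases "l = 0")
      case True thus ?thesis using l by simp
    next
      case False
      have "\<forall>k l. k < l \<and> l < n \<longrightarrow> v i (r i l) \<le> v i (r i k)"
        using cons i(1) unfolding consistent_def by blast
      from this[rule_format, of 0 l] show ?thesis using False l by simp
    qed
  qed
  have "1 = (\<Sum>k<n. v i k)" using us i unfolding unit_sum_def by auto
  also have "\<dots> \<le> (\<Sum>k<n. v i (r i 0))" by (intro sum_mono) (use maxv in auto)
  finally have vi: "1 / real n \<le> v i (y i)" using n i by (simp add: field_simps)
  have nonneg: "\<And>j. j < n \<Longrightarrow> 0 \<le> v j (y j)"
    using us matching_lt[OF y] unfolding unit_sum_def by auto
  have "v i (y i) \<le> SW n v y"
    unfolding SW_def using i nonneg by (intro member_le_sum) auto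
  hence sw: "1 / real n \<le> SW n v y" using vi by linarith
  have swpos: "SW n v y > 0" proof -
    have "0 < 1 / real n" using n by simp
    thus ?thesis using sw by linarith
  qed
  have opt: "OPT n v \<le> real n" using OPT_le[OF us] .
  have "OPT n v / SW n v y \<le> real n / SW n v y"
    using opt swpos by (simp add: divide_right_mono)
  also have "\<dots> \<le> real n / (1 / real n)"
    using sw n swpos by (intro divide_left_mono) auto
  also have "\<dots> = real n ^ 2" by (simp add: power2_eq_square)
  finally show "ratio (OPT n (fst (v, r))) (SW n (fst (v, r)) (A (snd (v, r)))) \<le> ereal (real n ^ 2)"
    using swpos unfolding ratio_def y_def by simp
qed

lemma count_zero:
  fixes y :: "nat \<Rightarrow> nat"
  assumes "y permutes {..<n}" "n \<ge> 1"
  shows "(\<Sum>j<n. if y j = 0 then (a::real) else 0) = a"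
proof -
  define g where "g k = (if k = 0 then a else 0)" for k :: nat
  have "(\<Sum>j<n. if y j = 0 then a else 0) = sum (g \<circ> y) {..<n}"
    by (simp add: g_def o_def)
  also have "\<dots> = sum g {..<n}" using sum.permute[OF assms(1), of g] by simp
  also have "\<dots> = a" using assms(2) by (simp add: g_def)
  finally show ?thesis .
qed

lemma part2:
  assumes n6: "n \<ge> 6" and alg: "ordinal_alg n A"
  shows "ereal (1/8 * real n ^ 2) \<le> distortion n A"
proof -
  have n1: "n \<ge> 1" "n \<ge> 2" using n6 by auto
  define q where "q j = j div 2 + 1" for j :: nat
  have q0: "q j \<noteq> 0" for j by (simp add: q_def)
  have qn: "q j < n" if "j < n" for j using that n6 unfolding q_def by linarith
  define r where "r i = (if i < n then transpose 1 (q i) else id)" for i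
  have op: "ordinal_profile n r"
    unfolding ordinal_profile_def r_def using qn n1
    by (auto intro!: permutes_swap_id)
  define y where "y = A r"
  have y: "y \<in> matchings n" using alg op unfolding ordinal_alg_def y_def by auto
  have yp: "y permutes {..<n}" using y unfolding matchings_def by simp
  have yinj: "inj y" using permutes_inj[OF yp] .
  define v where "v j k = (if y j = 0 then 1 / real n else if y j = q j then (if k = 0 then 1 else 0)
      else (if k = 0 \<or> k = q j then 1/2 else 0))" for j k
  have vnn: "0 \<le> v j k" for j k unfolding v_def by auto
  have us: "unit_sum n v"
    unfolding unit_sum_def
  proof (rule allI, rule impI, rule conjI)
    fix i assume i: "i < n"
    show "\<forall>j<n. 0 \<le> v i j" using vnn by auto
    have e: "(if k = 0 \<or> k = q i then 1/2 else 0) = (if k = 0 then 1/2 else 0) + (if k = q i then (1::real)/2 else 0)" for k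
      using q0[of i] by auto
    show "(\<Sum>j<n. v i j) = 1"
    proof (cases "y i = 0")
      case True thus ?thesis using n1 by (simp add: v_def)
    next
      case f1: False
      show ?thesis
      proof (cases "y i = q i")
        case True thus ?thesis using n1 f1 by (simp add: v_def)
      next
        case False
        have "(\<Sum>j<n. v i j) = (\<Sum>j<n. (if j = 0 then 1/2 else 0) + (if j = q i then (1::real)/2 else 0))"
          using f1 False by (simp add: v_def e)
        also have "\<dots> = 1" using n1 qn[OF i] by (simp add: sum.distrib)
        finally show ?thesis .
      qed
    qed
  qed
  have r0: "r i 0 = 0" if "i < n" for i using that q0[of i] by (simp add: r_def)
  have rl: "r i l \<noteq> 0 \<and> r i l \<noteq> q i" if "i < n" "2 \<le> l" for i l
    using that q0[of i] by (auto simp: r_def transpose_def)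
  have vtop: "v i k \<le> v i 0" for i k unfolding v_def by auto
  have vlow: "v i (r i l) = (if y i = 0 then 1 / real n else 0)" if "i < n" "2 \<le> l" for i l
    using rl[OF that] unfolding v_def by auto
  have cons: "consistent n v r"
    unfolding consistent_def
  proof (intro conjI op allI impI)
    fix i k l assume i: "i < n" and kl: "k < l \<and> l < n"
    show "v i (r i l) \<le> v i (r i k)"
    proof (cases "k = 0")
      case True thus ?thesis using r0[OF i] vtop by simp
    next
      case False
      hence l2: "2 \<le> l" using kl by auto
      show ?thesis
      proof (cases "y i = 0")
        case True thus ?thesis using vlow[OF i l2] by (simp add: v_def)
      next
        case False thus ?thesis using vlow[OF i l2] vnn by simp
      qed
    qed
  qed
  have swv: "SW n v y = 1 / real n"
  proof -
    have "v j (y j) = (if y j = 0 then 1 / real n else 0)" for j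
      using q0[of j] unfolding v_def by auto
    hence "SW n v y = (\<Sum>j<n. if y j = 0 then 1 / real n else 0)" unfolding SW_def by simp
    also have "\<dots> = 1 / real n" using count_zero[OF yp n1(1)] .
    finally show ?thesis .
  qed
  define m where "m = n div 2"
  define c where "c i = (if y (2*i) = q (2*i) then 2*i+1 else 2*i)" for i
  have cdiv: "c i div 2 = i" for i unfolding c_def by auto
  have cinj: "inj_on c {..<m}" by (rule inj_on_inverseI[where g = "\<lambda>j. j div 2"]) (simp add: cdiv)
  have cn: "c i < n" if "i < m" for i using that unfolding c_def m_def by auto
  have qc: "q (c i) = i + 1" for i unfolding q_def using cdiv by simp
  have ycq: "y (c i) \<noteq> q (c i)" if "i < m" for i
  proof (cases "y (2*i) = q (2*i)")
    case True
    hence "c i = 2*i+1" by (simp add: c_def)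
    moreover have "y (2*i+1) \<noteq> y (2*i)" using yinj by (simp add: inj_eq)
    moreover have "q (2*i) = q (2*i+1)" unfolding q_def by simp
    ultimately show ?thesis using True by simp
  next
    case False thus ?thesis by (simp add: c_def)
  qed
  define P where "P = c ` {..<m}"
  have PS: "P \<subseteq> {..<n}" using cn unfolding P_def by auto
  have qinj: "inj_on q P" unfolding P_def inj_on_def using qc by auto
  have qP: "q ` P \<subseteq> {..<n}" using PS qn by auto
  obtain p where pp: "p permutes {..<n}" and pq: "\<forall>x\<in>P. p x = q x"
    using extend_perm[OF _ PS qinj qP] by auto
  have pm: "p \<in> matchings n" using pp unfolding matchings_def by simp
  have vc: "1/2 - (if y (c i) = 0 then 1/2 else 0) \<le> v (c i) (q (c i))" if "i < m" for i
    using ycq[OF that] q0 unfolding v_def by auto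
  have cnt: "(\<Sum>i<m. if y (c i) = 0 then (1::real) else 0) \<le> 1"
  proof -
    have "(\<Sum>i<m. if y (c i) = 0 then (1::real) else 0) = (\<Sum>j\<in>P. if y j = 0 then 1 else 0)"
      unfolding P_def by (simp add: sum.reindex[OF cinj])
    also have "\<dots> \<le> (\<Sum>j<n. if y j = 0 then 1 else 0)"
      using PS by (intro sum_mono2) auto
    also have "\<dots> = 1" using count_zero[OF yp n1(1)] .
    finally show ?thesis .
  qed
  have "(\<Sum>i<m. 1/2 - (if y (c i) = 0 then 1/2 else 0)) = real m / 2 - (\<Sum>i<m. if y (c i) = 0 then (1::real) else 0) / 2"
  proof -
    have "real m / 2 - (\<Sum>i<m. if y (c i) = 0 then (1::real) else 0) / 2
        = (\<Sum>i<m. 1/2 - (if y (c i) = 0 then (1::real) else 0) / 2)"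
      by (simp add: sum_subtractf sum_divide_distrib)
    also have "\<dots> = (\<Sum>i<m. 1/2 - (if y (c i) = 0 then 1/2 else 0))"
      by (intro sum.cong) auto
    finally show ?thesis by simp
  qed
  also have "\<dots> \<ge> real m / 2 - 1/2" using cnt by simp
  finally have lb1: "real m / 2 - 1/2 \<le> (\<Sum>i<m. 1/2 - (if y (c i) = 0 then 1/2 else 0))" .
  also have "\<dots> \<le> (\<Sum>i<m. v (c i) (q (c i)))" using vc by (intro sum_mono) auto
  also have "\<dots> = (\<Sum>j\<in>P. v j (q j))" unfolding P_def by (simp add: sum.reindex[OF cinj])
  also have "\<dots> = (\<Sum>j\<in>P. v j (p j))" using pq by simp
  also have "\<dots> \<le> SW n v p" unfolding SW_def using PS vnn by (intro sum_mono2) auto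
  also have "\<dots> \<le> OPT n v" using OPT_ge[OF pm] .
  finally have optb: "real m / 2 - 1/2 \<le> OPT n v" .
  have m2: "real n - 1 \<le> 2 * real m" unfolding m_def by linarith
  have npos: "0 < real n" using n1 by simp
  have "1/8 * real n ^ 2 \<le> (real m / 2 - 1/2) * real n"
  proof -
    have "1/8 * real n \<le> real m / 2 - 1/2" using m2 n6 by simp
    from mult_right_mono[OF this less_imp_le[OF npos]] show ?thesis
      by (simp add: power2_eq_square)
  qed
  also have "\<dots> \<le> OPT n v * real n" using optb npos by (intro mult_right_mono) auto
  also have "\<dots> = OPT n v / (1 / real n)" by simp
  finally have "ereal (1/8 * real n ^ 2) \<le> ratio (OPT n v) (SW n v (A r))"
    using npos unfolding ratio_def y_def[symmetric] swv by simp
  also have "\<dots> \<le> distortion n A"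
    unfolding distortion_def
    using us cons by (intro SUP_upper2[where i = "(v, r)"]) auto
  finally show ?thesis .
qed

theorem theorem1:
  shows "(\<forall>n A. n \<ge> 1 \<and> ordinal_alg n A \<and>
            (\<forall>r. ordinal_profile n r \<longrightarrow> (\<exists>i<n. A r i = r i 0))
          \<longrightarrow> distortion n A \<le> ereal (real n ^ 2))
       \<and> (\<exists>c>0. \<exists>N. \<forall>n\<ge>N. \<forall>A. ordinal_alg n A
          \<longrightarrow> distortion n A \<ge> ereal (c * real n ^ 2))"
proof
  show "\<forall>n A. n \<ge> 1 \<and> ordinal_alg n A \<and>
            (\<forall>r. ordinal_profile n r \<longrightarrow> (\<exists>i<n. A r i = r i 0))
          \<longrightarrow> distortion n A \<le> ereal (real n ^ 2)"
    using part1 by blast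
  show "\<exists>c>0. \<exists>N. \<forall>n\<ge>N. \<forall>A. ordinal_alg n A
          \<longrightarrow> distortion n A \<ge> ereal (c * real n ^ 2)"
    by (rule exI[where x = "1/8"]) (use part2 in auto)
qed

end
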